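(* For any $p>\sqrt{1/2}$ there is $c=c(p)<\infty$ and an oracle routing algorithm between the two roots of $TT_n$ in $TT_{n,p}$ whose average (expected) routing complexity is at most $cn$.
   Context: The double binary tree $TT_n$ is obtained by taking two complete binary trees of uniform depth $n$ and identifying their corresponding leaves; its roots are the roots of the two trees. $TT_{n,p}$ is the random subgraph in which each edge is open independently with probability $p$. An oracle routing algorithm may probe whether any edge of the graph is open (no locality restriction) and outputs an open path between the two given vertices if one exists. Its routing complexity is the number of probes made until a path is found, conditioned on the event that the two vertices are connected by an open path. *)

theory Defs
  imports "HOL-Probability.Probability"
begin

text \<open>A vertex is a pair (t, w): t :: bool names one of
the two trees and w :: bool list is the address of the vertex (root = [],
children of w are w @ [b]).  Vertices at depth n (the leaves) are shared by
the two trees, so they are normalised to tree tag False.\<close>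

type_synonym vertex = "bool \<times> bool list"

definition vert :: "nat \<Rightarrow> bool \<Rightarrow> bool list \<Rightarrow> vertex" where
  "vert n t w = (if length w = n then (False, w) else (t, w))"

definition root :: "nat \<Rightarrow> bool \<Rightarrow> vertex" where
  "root n t = vert n t []"

type_synonym edge = "bool \<times> bool list"

definition edges :: "nat \<Rightarrow> edge set" where
  "edges n = {(t, w). w \<noteq> [] \<and> length w \<le> n}"

definition ends :: "nat \<Rightarrow> edge \<Rightarrow> vertex \<times> vertex" where
  "ends n e = (vert n (fst e) (butlast (snd e)), vert n (fst e) (snd e))"

definition adj :: "nat \<Rightarrow> edge set \<Rightarrow> (vertex \<times> vertex) set" where
  "adj n S = {(a, b). \<exists>e \<in> S \<inter> edges n. ends n e = (a, b) \<or> ends n e = (b, a)}"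

definition roots_connected :: "nat \<Rightarrow> edge set \<Rightarrow> bool" where
  "roots_connected n S \<longleftrightarrow> (root n False, root n True) \<in> (adj n S)\<^sup>*"

definition perc :: "nat \<Rightarrow> real \<Rightarrow> (edge \<Rightarrow> bool) pmf" where
  "perc n p = Pi_pmf (edges n) False (\<lambda>_. bernoulli_pmf p)"

definition open_edges :: "(edge \<Rightarrow> bool) \<Rightarrow> edge set" where
  "open_edges \<omega> = {e. \<omega> e}"

text \<open>An (adaptive, deterministic) oracle algorithm: given the history of probes
and answers so far, it either probes a further edge (Some e) or stops (None).\<close>
type_synonym strategy = "(edge \<times> bool) list \<Rightarrow> edge option"

fun history :: "strategy \<Rightarrow> (edge \<Rightarrow> bool) \<Rightarrow> nat \<Rightarrow> (edge \<times> bool) list" where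
  "history \<sigma> \<omega> 0 = []"
| "history \<sigma> \<omega> (Suc k) =
     (case \<sigma> (history \<sigma> \<omega> k) of
        None \<Rightarrow> history \<sigma> \<omega> k
      | Some e \<Rightarrow> history \<sigma> \<omega> k @ [(e, \<omega> e)])"

definition found :: "nat \<Rightarrow> strategy \<Rightarrow> (edge \<Rightarrow> bool) \<Rightarrow> nat \<Rightarrow> bool" where
  "found n \<sigma> \<omega> k \<longleftrightarrow> roots_connected n {e. (e, True) \<in> set (history \<sigma> \<omega> k)}"

definition routing_cost :: "nat \<Rightarrow> strategy \<Rightarrow> (edge \<Rightarrow> bool) \<Rightarrow> ennreal" where
  "routing_cost n \<sigma> \<omega> =
     (if \<exists>k. found n \<sigma> \<omega> k
      then of_nat (length (history \<sigma> \<omega> (LEAST k. found n \<sigma> \<omega> k)))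
      else \<top>)"

definition expected_routing_cost :: "nat \<Rightarrow> real \<Rightarrow> strategy \<Rightarrow> ennreal" where
  "expected_routing_cost n p \<sigma> =
     (\<integral>\<^sup>+ \<omega>. routing_cost n \<sigma> \<omega> * indicator {\<omega>. roots_connected n (open_edges \<omega>)} \<omega>
        \<partial>measure_pmf (perc n p))
     / emeasure (measure_pmf (perc n p)) {\<omega>. roots_connected n (open_edges \<omega>)}"

end

theory Submission
  imports Defs
begin

fun succ :: "bool list \<Rightarrow> nat \<Rightarrow> (edge \<Rightarrow> bool) \<Rightarrow> bool" where
  "succ w 0 \<omega> = True"
| "succ w (Suc m) \<omega> =
     ((\<omega> (False, w@[False]) \<and> \<omega> (True, w@[False]) \<and> succ (w@[False]) m \<omega>) \<or>
      (\<omega> (False, w@[True]) \<and> \<omega> (True, w@[True]) \<and> succ (w@[True]) m \<omega>))"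

definition br :: "bool list \<Rightarrow> bool \<Rightarrow> nat \<Rightarrow> (edge \<Rightarrow> bool) \<Rightarrow> bool" where
  "br w b m \<omega> = (\<omega> (False, w@[b]) \<and> \<omega> (True, w@[b]) \<and> succ (w@[b]) m \<omega>)"

lemma succ_Suc_br: "succ w (Suc m) \<omega> = (br w False m \<omega> \<or> br w True m \<omega>)"
  by (simp add: br_def)

fun dfs :: "bool list \<Rightarrow> nat \<Rightarrow> (edge \<Rightarrow> bool) \<Rightarrow> edge list" where
  "dfs w 0 \<omega> = []"
| "dfs w (Suc m) \<omega> =
     ((False, w@[False]) # (if \<omega> (False, w@[False]) then (True, w@[False]) #
         (if \<omega> (True, w@[False]) then dfs (w@[False]) m \<omega> else []) else [])) @
     (if \<omega> (False, w@[False]) \<and> \<omega> (True, w@[False]) \<and> succ (w@[False]) m \<omega> then [] else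
      ((False, w@[True]) # (if \<omega> (False, w@[True]) then (True, w@[True]) #
         (if \<omega> (True, w@[True]) then dfs (w@[True]) m \<omega> else []) else [])))"

definition blk :: "bool list \<Rightarrow> bool \<Rightarrow> nat \<Rightarrow> (edge \<Rightarrow> bool) \<Rightarrow> edge list" where
  "blk w b m \<omega> = (False, w@[b]) # (if \<omega> (False, w@[b]) then (True, w@[b]) #
         (if \<omega> (True, w@[b]) then dfs (w@[b]) m \<omega> else []) else [])"

lemma dfs_Suc': "dfs w (Suc m) \<omega> = blk w False m \<omega> @ (if br w False m \<omega> then [] else blk w True m \<omega>)"
  by (simp add: blk_def br_def)

declare dfs.simps(2)[simp del] succ.simps(2)[simp del]

definition agree :: "edge set \<Rightarrow> (edge \<Rightarrow> bool) \<Rightarrow> (edge \<Rightarrow> bool) \<Rightarrow> bool" where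
  "agree S \<omega> \<omega>' \<longleftrightarrow> (\<forall>e\<in>S. \<omega>' e = \<omega> e)"

lemma agree_mono: "agree S \<omega> \<omega>' \<Longrightarrow> T \<subseteq> S \<Longrightarrow> agree T \<omega> \<omega>'"
  by (auto simp: agree_def)

lemma br_det:
  assumes IH: "\<And>\<omega> \<omega>'. agree (set (dfs (w@[b]) m \<omega>)) \<omega> \<omega>' \<Longrightarrow> succ (w@[b]) m \<omega>' = succ (w@[b]) m \<omega>"
  and a: "agree (set (blk w b m \<omega>)) \<omega> \<omega>'"
  shows "br w b m \<omega>' = br w b m \<omega>"
proof -
  have 1: "\<omega>' (False, w@[b]) = \<omega> (False, w@[b])" using a by (auto simp: agree_def blk_def)
  show ?thesis
  proof (cases "\<omega> (False, w@[b])")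
    case False thus ?thesis using 1 by (simp add: br_def)
  next
    case T1: True
    have 2: "\<omega>' (True, w@[b]) = \<omega> (True, w@[b])" using a T1 by (auto simp: agree_def blk_def)
    show ?thesis
    proof (cases "\<omega> (True, w@[b])")
      case False thus ?thesis using 1 2 by (simp add: br_def)
    next
      case True
      have "agree (set (dfs (w@[b]) m \<omega>)) \<omega> \<omega>'" using a T1 True
        by (auto simp: agree_def blk_def)
      thus ?thesis using IH 1 2 by (simp add: br_def)
    qed
  qed
qed

lemma succ_det: "agree (set (dfs w m \<omega>)) \<omega> \<omega>' \<Longrightarrow> succ w m \<omega>' = succ w m \<omega>"
proof (induction m arbitrary: w \<omega> \<omega>')
  case 0 thus ?case by simp
next
  case (Suc m)
  have aF: "agree (set (blk w False m \<omega>)) \<omega> \<omega>'"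
    using Suc.prems by (auto simp: dfs_Suc' agree_def)
  have bF: "br w False m \<omega>' = br w False m \<omega>"
    by (rule br_det[OF Suc.IH aF])
  show ?case
  proof (cases "br w False m \<omega>")
    case True thus ?thesis using bF by (simp add: succ_Suc_br)
  next
    case False
    have aT: "agree (set (blk w True m \<omega>)) \<omega> \<omega>'"
      using Suc.prems False by (auto simp: dfs_Suc' agree_def)
    have "br w True m \<omega>' = br w True m \<omega>"
      by (rule br_det[OF Suc.IH aT])
    thus ?thesis using bF by (simp add: succ_Suc_br)
  qed
qed

definition adaptive :: "((edge \<Rightarrow> bool) \<Rightarrow> edge list) \<Rightarrow> bool" where
  "adaptive F \<longleftrightarrow> (\<forall>\<omega> \<omega>' k. agree (set (take k (F \<omega>))) \<omega> \<omega>' \<longrightarrow>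
      take (Suc k) (F \<omega>') = take (Suc k) (F \<omega>))"

lemma adaptive_full:
  assumes "adaptive F" "agree (set (F \<omega>)) \<omega> \<omega>'"
  shows "F \<omega>' = F \<omega>"
proof -
  let ?k = "length (F \<omega>)"
  have "agree (set (take ?k (F \<omega>))) \<omega> \<omega>'" using assms(2) by simp
  hence "take (Suc ?k) (F \<omega>') = take (Suc ?k) (F \<omega>)"
    using assms(1) unfolding adaptive_def by blast
  hence e: "take (Suc ?k) (F \<omega>') = F \<omega>" by simp
  have "min (Suc ?k) (length (F \<omega>')) = ?k" using arg_cong[OF e, of length] by simp
  hence "length (F \<omega>') = ?k" by (simp add: min_def split: if_splits)
  thus ?thesis using e by simp
qed

lemma adaptive_Nil: "adaptive (\<lambda>_. [])"
  by (simp add: adaptive_def)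

lemma adaptive_Cons:
  assumes G: "adaptive G" and H: "adaptive H"
  shows "adaptive (\<lambda>\<omega>. e # (if \<omega> e then G \<omega> else H \<omega>))"
  unfolding adaptive_def
proof (intro allI impI)
  fix \<omega> \<omega>' k
  assume a: "agree (set (take k (e # (if \<omega> e then G \<omega> else H \<omega>)))) \<omega> \<omega>'"
  show "take (Suc k) (e # (if \<omega>' e then G \<omega>' else H \<omega>')) =
        take (Suc k) (e # (if \<omega> e then G \<omega> else H \<omega>))"
  proof (cases k)
    case 0 thus ?thesis by simp
  next
    case (Suc k')
    have ee: "\<omega>' e = \<omega> e" using a Suc by (auto simp: agree_def)
    have a': "agree (set (take k' (if \<omega> e then G \<omega> else H \<omega>))) \<omega> \<omega>'"
      using a Suc by (auto simp: agree_def)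
    show ?thesis
    proof (cases "\<omega> e")
      case True
      hence "take (Suc k') (G \<omega>') = take (Suc k') (G \<omega>)"
        using G a' unfolding adaptive_def by auto
      thus ?thesis using Suc ee True by simp
    next
      case False
      hence "take (Suc k') (H \<omega>') = take (Suc k') (H \<omega>)"
        using H a' unfolding adaptive_def by auto
      thus ?thesis using Suc ee False by simp
    qed
  qed
qed

lemma adaptive_append:
  assumes G: "adaptive G" and H: "adaptive H"
    and P: "\<And>\<omega> \<omega>'. agree (set (G \<omega>)) \<omega> \<omega>' \<Longrightarrow> P \<omega>' = P \<omega>"
  shows "adaptive (\<lambda>\<omega>. G \<omega> @ (if P \<omega> then [] else H \<omega>))"
  unfolding adaptive_def
proof (intro allI impI)
  fix \<omega> \<omega>' k
  let ?K = "\<lambda>\<omega>. (if P \<omega> then [] else H \<omega>)"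
  assume a: "agree (set (take k (G \<omega> @ ?K \<omega>))) \<omega> \<omega>'"
  show "take (Suc k) (G \<omega>' @ ?K \<omega>') = take (Suc k) (G \<omega> @ ?K \<omega>)"
  proof (cases "k < length (G \<omega>)")
    case True
    have "agree (set (take k (G \<omega>))) \<omega> \<omega>'" using a True by simp
    hence t: "take (Suc k) (G \<omega>') = take (Suc k) (G \<omega>)" using G unfolding adaptive_def by blast
    have "min (Suc k) (length (G \<omega>')) = Suc k" using arg_cong[OF t, of length] True by simp
    hence "Suc k \<le> length (G \<omega>')" by (simp add: min_def split: if_splits)
    thus ?thesis using t True by simp
  next
    case False
    have ag: "agree (set (G \<omega>)) \<omega> \<omega>'" using a False
      by (simp add: agree_def)
    have g: "G \<omega>' = G \<omega>" by (rule adaptive_full[OF G ag])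
    have p: "P \<omega>' = P \<omega>" by (rule P[OF ag])
    show ?thesis
    proof (cases "P \<omega>")
      case True thus ?thesis using g p by simp
    next
      case PF: False
      have "agree (set (take (k - length (G \<omega>)) (H \<omega>))) \<omega> \<omega>'"
        using a False PF by (auto simp: agree_def)
      hence "take (Suc (k - length (G \<omega>))) (H \<omega>') = take (Suc (k - length (G \<omega>))) (H \<omega>)"
        using H unfolding adaptive_def by blast
      moreover have "Suc k - length (G \<omega>) = Suc (k - length (G \<omega>))" using False by simp
      ultimately show ?thesis using g p PF False by simp
    qed
  qed
qed

lemma adaptive_dfs: "adaptive (dfs w m)"
proof (induction m arbitrary: w)
  case 0 thus ?case by (simp add: adaptive_Nil)
next
  case (Suc m)
  have blk: "adaptive (blk w b m)" for b
    unfolding blk_def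
    by (intro adaptive_Cons adaptive_Nil Suc.IH)
  have "adaptive (\<lambda>\<omega>. blk w False m \<omega> @ (if br w False m \<omega> then [] else blk w True m \<omega>))"
  proof (rule adaptive_append[OF blk blk])
    fix \<omega> \<omega>' assume a: "agree (set (blk w False m \<omega>)) \<omega> \<omega>'"
    have IH: "\<And>\<omega> \<omega>'. agree (set (dfs (w@[False]) m \<omega>)) \<omega> \<omega>' \<Longrightarrow> succ (w@[False]) m \<omega>' = succ (w@[False]) m \<omega>"
      by (rule succ_det)
    show "br w False m \<omega>' = br w False m \<omega>"
      by (rule br_det[OF IH a])
  qed
  thus ?case by (simp add: dfs_Suc')
qed


definition sigma :: "nat \<Rightarrow> strategy" where
  "sigma n h = (let L = dfs [] n (\<lambda>e. (e, True) \<in> set h) in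
     if length h < length L then Some (L ! length h) else None)"

lemma history_sigma:
  "history (sigma n) \<omega> k = map (\<lambda>e. (e, \<omega> e)) (take k (dfs [] n \<omega>))"
proof (induction k)
  case 0 thus ?case by simp
next
  case (Suc k)
  define L where "L = dfs [] n \<omega>"
  define h where "h = map (\<lambda>e. (e, \<omega> e)) (take k L)"
  define \<omega>h where "\<omega>h = (\<lambda>e. (e, True) \<in> set h)"
  have ag: "agree (set (take k L)) \<omega> \<omega>h"
    unfolding agree_def \<omega>h_def h_def by auto
  have tk: "take (Suc k) (dfs [] n \<omega>h) = take (Suc k) L"
    using adaptive_dfs[of "[]" n] ag unfolding adaptive_def L_def by blast
  have hist: "history (sigma n) \<omega> k = h" using Suc.IH by (simp add: h_def L_def)
  show ?case
  proof (cases "k < length L")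
    case True
    have lh: "length h = k" using True by (simp add: h_def)
    have "min (Suc k) (length (dfs [] n \<omega>h)) = Suc k" using arg_cong[OF tk, of length] True by simp
    hence len: "k < length (dfs [] n \<omega>h)" by (simp add: min_def split: if_splits)
    have nth: "dfs [] n \<omega>h ! k = L ! k"
      using arg_cong[OF tk, of "\<lambda>xs. xs ! k"] by simp
    have "sigma n h = Some (L ! k)"
      unfolding sigma_def Let_def using lh len nth \<omega>h_def by simp
    hence "history (sigma n) \<omega> (Suc k) = h @ [(L ! k, \<omega> (L ! k))]" using hist by simp
    also have "\<dots> = map (\<lambda>e. (e, \<omega> e)) (take (Suc k) L)"
      using True by (simp add: h_def take_Suc_conv_app_nth)
    finally show ?thesis by (simp add: L_def)
  next
    case False
    have lh: "length h = length L" using False by (simp add: h_def)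
    have ag2: "agree (set L) \<omega> \<omega>h" using ag False by simp
    have "dfs [] n \<omega>h = L"
      using adaptive_full[OF adaptive_dfs ag2[unfolded L_def]] by (simp add: L_def)
    hence "sigma n h = None"
      unfolding sigma_def Let_def using lh \<omega>h_def by simp
    hence "history (sigma n) \<omega> (Suc k) = h" using hist by simp
    thus ?thesis using False by (simp add: h_def L_def)
  qed
qed

lemma br_path:
  assumes IH: "\<And>w. succ w m \<omega> \<Longrightarrow> \<exists>v. length v = m \<and> (\<forall>k t. 0 < k \<and> k \<le> m \<longrightarrow>
        (t, w @ take k v) \<in> set (dfs w m \<omega>) \<and> \<omega> (t, w @ take k v))"
  and b: "br w b m \<omega>"
  shows "\<exists>v. length v = Suc m \<and> (\<forall>k t. 0 < k \<and> k \<le> Suc m \<longrightarrow>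
        (t, w @ take k v) \<in> set (blk w b m \<omega>) \<and> \<omega> (t, w @ take k v))"
proof -
  have o1: "\<omega> (False, w@[b])" and o2: "\<omega> (True, w@[b])" and s: "succ (w@[b]) m \<omega>"
    using b by (auto simp: br_def)
  obtain v where v: "length v = m" and P: "\<forall>k t. 0 < k \<and> k \<le> m \<longrightarrow>
        (t, (w@[b]) @ take k v) \<in> set (dfs (w@[b]) m \<omega>) \<and> \<omega> (t, (w@[b]) @ take k v)"
    using IH[OF s] by blast
  have sub: "set (dfs (w@[b]) m \<omega>) \<subseteq> set (blk w b m \<omega>)"
    using o1 o2 by (auto simp: blk_def)
  have "\<forall>k t. 0 < k \<and> k \<le> Suc m \<longrightarrow>
        (t, w @ take k (b # v)) \<in> set (blk w b m \<omega>) \<and> \<omega> (t, w @ take k (b # v))"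
  proof (intro allI impI)
    fix k t assume k: "0 < k \<and> k \<le> Suc m"
    show "(t, w @ take k (b # v)) \<in> set (blk w b m \<omega>) \<and> \<omega> (t, w @ take k (b # v))"
    proof (cases "k = 1")
      case True thus ?thesis using o1 o2 by (cases t) (auto simp: blk_def)
    next
      case False
      then obtain k' where k': "k = Suc k'" "0 < k'" "k' \<le> m" using k by (cases k) auto
      have "w @ take k (b # v) = (w@[b]) @ take k' v" using k' by simp
      thus ?thesis using P k' sub by auto
    qed
  qed
  moreover have "length (b # v) = Suc m" using v by simp
  ultimately show ?thesis by blast
qed

lemma succ_path:
  "succ w m \<omega> \<Longrightarrow> \<exists>v. length v = m \<and> (\<forall>k t. 0 < k \<and> k \<le> m \<longrightarrow>
        (t, w @ take k v) \<in> set (dfs w m \<omega>) \<and> \<omega> (t, w @ take k v))"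
proof (induction m arbitrary: w)
  case 0 thus ?case by force
next
  case (Suc m)
  show ?case
  proof (cases "br w False m \<omega>")
    case True
    from br_path[OF Suc.IH True] show ?thesis by (auto simp: dfs_Suc' True)
  next
    case False
    hence T: "br w True m \<omega>" using Suc.prems by (simp add: succ_Suc_br)
    from br_path[OF Suc.IH T] show ?thesis by (auto simp: dfs_Suc' False)
  qed
qed

lemma adj_edge:
  assumes "(t, take (Suc k) u) \<in> S" "Suc k \<le> length u" "length u \<le> n"
  shows "(vert n t (take k u), vert n t (take (Suc k) u)) \<in> adj n S"
    and "(vert n t (take (Suc k) u), vert n t (take k u)) \<in> adj n S"
proof -
  have e: "(t, take (Suc k) u) \<in> S \<inter> edges n" using assms by (auto simp: edges_def)
  have "butlast (take (Suc k) u) = take k u" using assms by (simp add: butlast_take)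
  hence en: "ends n (t, take (Suc k) u) = (vert n t (take k u), vert n t (take (Suc k) u))"
    by (simp add: ends_def)
  show "(vert n t (take k u), vert n t (take (Suc k) u)) \<in> adj n S"
    unfolding adj_def using e en by blast
  show "(vert n t (take (Suc k) u), vert n t (take k u)) \<in> adj n S"
    unfolding adj_def using e en by blast
qed

lemma path_conn:
  assumes len: "length u = n" and P: "\<forall>k t. 0 < k \<and> k \<le> n \<longrightarrow> (t, take k u) \<in> S"
  shows "roots_connected n S"
proof -
  have down: "(root n False, vert n False (take k u)) \<in> (adj n S)\<^sup>*" if "k \<le> n" for k
    using that
  proof (induction k)
    case 0 thus ?case by (simp add: root_def)
  next
    case (Suc k)
    have "(vert n False (take k u), vert n False (take (Suc k) u)) \<in> adj n S"
      using adj_edge(1)[of False k u S n] P Suc.prems len by auto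
    thus ?case using Suc by (meson Suc_leD rtrancl.rtrancl_into_rtrancl)
  qed
  have up: "(vert n True (take k u), root n True) \<in> (adj n S)\<^sup>*" if "k \<le> n" for k
    using that
  proof (induction k)
    case 0 thus ?case by (simp add: root_def)
  next
    case (Suc k)
    have "(vert n True (take (Suc k) u), vert n True (take k u)) \<in> adj n S"
      using adj_edge(2)[of True k u S n] P Suc.prems len by auto
    thus ?case using Suc by (meson Suc_leD converse_rtrancl_into_rtrancl)
  qed
  have "vert n False (take n u) = vert n True (take n u)" using len by (simp add: vert_def)
  thus ?thesis unfolding roots_connected_def
    using down[of n] up[of n] by (metis order_refl rtrancl_trans)
qed

lemma found_cost:
  assumes "succ [] n \<omega>"
  shows "routing_cost n (sigma n) \<omega> \<le> of_nat (length (dfs [] n \<omega>))"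
proof -
  define K where "K = length (dfs [] n \<omega>)"
  obtain v where v: "length v = n" and P: "\<forall>k t. 0 < k \<and> k \<le> n \<longrightarrow>
        (t, take k v) \<in> set (dfs [] n \<omega>) \<and> \<omega> (t, take k v)"
    using succ_path[OF assms] by auto
  have hK: "history (sigma n) \<omega> K = map (\<lambda>e. (e, \<omega> e)) (dfs [] n \<omega>)"
    by (simp add: history_sigma K_def)
  have "roots_connected n {e. (e, True) \<in> set (history (sigma n) \<omega> K)}"
    by (rule path_conn[OF v]) (use P hK in auto)
  hence f: "found n (sigma n) \<omega> K" by (simp add: found_def)
  hence ex: "\<exists>k. found n (sigma n) \<omega> k" by blast
  have "(LEAST k. found n (sigma n) \<omega> k) \<le> K" using f by (rule Least_le)
  hence "length (history (sigma n) \<omega> (LEAST k. found n (sigma n) \<omega> k)) \<le> K"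
    by (simp add: history_sigma K_def)
  thus ?thesis using ex by (simp add: routing_cost_def K_def)
qed

definition dopen :: "(edge \<Rightarrow> bool) \<Rightarrow> bool list \<Rightarrow> bool" where
  "dopen \<omega> u \<longleftrightarrow> (\<forall>k. 0 < k \<and> k \<le> length u \<longrightarrow> \<omega> (False, take k u) \<and> \<omega> (True, take k u))"

lemma dopen_take: "dopen \<omega> u \<Longrightarrow> dopen \<omega> (take j u)"
  by (auto simp: dopen_def min_def)

lemma dopen_snoc: "dopen \<omega> (u @ [x]) \<longleftrightarrow> dopen \<omega> u \<and> \<omega> (False, u @ [x]) \<and> \<omega> (True, u @ [x])"
proof
  assume d: "dopen \<omega> (u @ [x])"
  have "dopen \<omega> (take (length u) (u @ [x]))" using dopen_take[OF d] .
  moreover have "\<omega> (False, u @ [x]) \<and> \<omega> (True, u @ [x])"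
    using d[unfolded dopen_def, rule_format, of "Suc (length u)"] by simp
  ultimately show "dopen \<omega> u \<and> \<omega> (False, u @ [x]) \<and> \<omega> (True, u @ [x])" by simp
next
  assume a: "dopen \<omega> u \<and> \<omega> (False, u @ [x]) \<and> \<omega> (True, u @ [x])"
  show "dopen \<omega> (u @ [x])"
    unfolding dopen_def
  proof (intro allI impI)
    fix k assume k: "0 < k \<and> k \<le> length (u @ [x])"
    show "\<omega> (False, take k (u @ [x])) \<and> \<omega> (True, take k (u @ [x]))"
    proof (cases "k \<le> length u")
      case True thus ?thesis using a k by (auto simp: dopen_def)
    next
      case False
      hence "take k (u @ [x]) = u @ [x]" using k by simp
      thus ?thesis using a by simp
    qed
  qed
qed

lemma dopen_succ:
  "length v = m \<Longrightarrow> (\<forall>k. 0 < k \<and> k \<le> m \<longrightarrow> \<omega> (False, w @ take k v) \<and> \<omega> (True, w @ take k v))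
   \<Longrightarrow> succ w m \<omega>"
proof (induction m arbitrary: w v)
  case 0 thus ?case by simp
next
  case (Suc m)
  then obtain b v' where v: "v = b # v'" by (cases v) auto
  have o: "\<omega> (False, w @ [b]) \<and> \<omega> (True, w @ [b])"
    using Suc.prems(2)[rule_format, of 1] v by simp
  have "succ (w @ [b]) m \<omega>"
  proof (rule Suc.IH[of v'])
    show "length v' = m" using Suc.prems v by simp
    show "\<forall>k. 0 < k \<and> k \<le> m \<longrightarrow> \<omega> (False, (w @ [b]) @ take k v') \<and> \<omega> (True, (w @ [b]) @ take k v')"
    proof (intro allI impI)
      fix k assume "0 < k \<and> k \<le> m"
      thus "\<omega> (False, (w @ [b]) @ take k v') \<and> \<omega> (True, (w @ [b]) @ take k v')"
        using Suc.prems(2)[rule_format, of "Suc k"] v by simp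
    qed
  qed
  hence "br w b m \<omega>" using o by (simp add: br_def)
  thus ?case by (cases b) (auto simp: succ_Suc_br)
qed


lemma conn_dopen:
  assumes conn: "roots_connected n (open_edges \<omega>)"
  shows "\<exists>u. length u = n \<and> dopen \<omega> u"
proof (rule ccontr)
  assume nd: "\<not> (\<exists>u. length u = n \<and> dopen \<omega> u)"
  have short: "length w < n" if "dopen \<omega> w" for w
  proof (rule ccontr)
    assume "\<not> length w < n"
    hence "length (take n w) = n" by simp
    moreover have "dopen \<omega> (take n w)" using dopen_take[OF that] .
    ultimately show False using nd by blast
  qed
  have d0: "dopen \<omega> []" by (simp add: dopen_def)
  hence n0: "0 < n" using short by fastforce
  define Exk where "Exk = (\<lambda>w. \<exists>k. 0 < k \<and> k \<le> length w \<and> dopen \<omega> (take (k - 1) w) \<and> \<not> \<omega> (True, take k w))"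
  define R where "R = (\<lambda>(t::bool, w). if dopen \<omega> w then t = False else Exk w)"
  have Rvert: "R (vert n t w) = R (t, w)" for t w
    using short by (auto simp: vert_def R_def)
  have Rstep: "R (t, butlast w) = R (t, w)"
    if w: "w \<noteq> []" and o: "\<omega> (t, w)" for t w
  proof -
    obtain u x where wx: "w = u @ [x]" using w by (metis append_butlast_last_id)
    have bu: "butlast w = u" using wx by simp
    have tk: "take k w = take k u" "take (k - 1) w = take (k - 1) u" if "k \<le> length u" for k
      using that wx by auto
    show ?thesis
    proof (cases "dopen \<omega> w")
      case True
      hence "dopen \<omega> u" using wx dopen_snoc by blast
      thus ?thesis using True bu by (simp add: R_def)
    next
      case dw: False
      show ?thesis
      proof (cases "dopen \<omega> u")
        case du: True
        have "Exk w \<longleftrightarrow> \<not> \<omega> (True, w)"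
        proof
          assume "Exk w"
          then obtain k where k: "0 < k" "k \<le> length w" "dopen \<omega> (take (k - 1) w)" "\<not> \<omega> (True, take k w)"
            unfolding Exk_def by blast
          show "\<not> \<omega> (True, w)"
          proof (cases "k \<le> length u")
            case True
            hence "\<omega> (True, take k u)" using du k(1) by (auto simp: dopen_def)
            thus ?thesis using k(4) tk(1)[OF True] by simp
          next
            case False
            hence "k = length w" using k wx by simp
            thus ?thesis using k(4) by simp
          qed
        next
          assume "\<not> \<omega> (True, w)"
          moreover have "take (length w - 1) w = u" using wx by simp
          ultimately show "Exk w" unfolding Exk_def using du wx
            by (intro exI[of _ "length w"]) simp
        qed
        moreover have "\<not> (\<omega> (False, w) \<and> \<omega> (True, w))" using dw du wx dopen_snoc by blast
        ultimately show ?thesis using dw du bu o by (cases t) (auto simp: R_def)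
      next
        case du: False
        have "Exk w \<longleftrightarrow> Exk u"
        proof
          assume "Exk w"
          then obtain k where k: "0 < k" "k \<le> length w" "dopen \<omega> (take (k - 1) w)" "\<not> \<omega> (True, take k w)"
            unfolding Exk_def by blast
          have "k \<le> length u"
          proof (rule ccontr)
            assume "\<not> k \<le> length u"
            hence "k = length w" using k wx by simp
            hence "take (k - 1) w = u" using wx by simp
            thus False using k(3) du by simp
          qed
          thus "Exk u" unfolding Exk_def using k tk by auto
        next
          assume "Exk u"
          then obtain k where k: "0 < k" "k \<le> length u" "dopen \<omega> (take (k - 1) u)" "\<not> \<omega> (True, take k u)"
            unfolding Exk_def by blast
          thus "Exk w" unfolding Exk_def using tk[OF k(2)] wx
            by (intro exI[of _ k]) simp
        qed
        thus ?thesis using dw du bu by (simp add: R_def)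
      qed
    qed
  qed
  have Radj: "R a = R b" if ab: "(a, b) \<in> adj n (open_edges \<omega>)" for a b
  proof -
    obtain e where e: "e \<in> open_edges \<omega> \<inter> edges n" "ends n e = (a, b) \<or> ends n e = (b, a)"
      using ab unfolding adj_def by blast
    obtain t w where tw: "e = (t, w)" by (cases e)
    have w: "w \<noteq> []" and o: "\<omega> (t, w)" using e tw by (auto simp: edges_def open_edges_def)
    have "R (vert n t (butlast w)) = R (vert n t w)"
      using Rvert Rstep[OF w o] by simp
    thus ?thesis using e(2) tw by (auto simp: ends_def)
  qed
  have "R (root n False)" using d0 n0 by (simp add: root_def vert_def R_def)
  moreover have "\<not> R (root n True)" using d0 n0 by (simp add: root_def vert_def R_def)
  moreover have "R (root n False) \<Longrightarrow> R v" if "(root n False, v) \<in> (adj n (open_edges \<omega>))\<^sup>*" for v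
    using that
  proof (induction rule: rtrancl_induct)
    case base thus ?case .
  next
    case (step y z)
    have "R y = R z" by (rule Radj[OF step(2)])
    thus ?case using step by simp
  qed
  ultimately show False using conn unfolding roots_connected_def by blast
qed

lemma conn_succ: "roots_connected n (open_edges \<omega>) \<Longrightarrow> succ [] n \<omega>"
proof -
  assume "roots_connected n (open_edges \<omega>)"
  then obtain u where u: "length u = n" "dopen \<omega> u" using conn_dopen by blast
  have "\<forall>k. 0 < k \<and> k \<le> n \<longrightarrow> \<omega> (False, [] @ take k u) \<and> \<omega> (True, [] @ take k u)"
    using u unfolding dopen_def by simp
  thus "succ [] n \<omega>" by (rule dopen_succ[OF u(1)])
qed

lemma succ_conn:
  assumes "succ [] n \<omega>" shows "roots_connected n (open_edges \<omega>)"
proof -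
  obtain v where v: "length v = n" and P: "\<forall>k t. 0 < k \<and> k \<le> n \<longrightarrow>
        (t, [] @ take k v) \<in> set (dfs [] n \<omega>) \<and> \<omega> (t, [] @ take k v)"
    using succ_path[OF assms] by blast
  have "\<forall>k t. 0 < k \<and> k \<le> n \<longrightarrow> (t, take k v) \<in> open_edges \<omega>"
    using P by (simp add: open_edges_def)
  thus ?thesis by (rule path_conn[OF v])
qed


definition QQ :: "real \<Rightarrow> edge set \<Rightarrow> (edge \<Rightarrow> bool) pmf" where
  "QQ p J = Pi_pmf J False (\<lambda>_. bernoulli_pmf p)"

definition loc :: "edge set \<Rightarrow> ((edge \<Rightarrow> bool) \<Rightarrow> 'a) \<Rightarrow> bool" where
  "loc J f \<longleftrightarrow> (\<forall>\<omega> \<omega>'. agree J \<omega> \<omega>' \<longrightarrow> f \<omega>' = f \<omega>)"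

definition bern :: "real \<Rightarrow> (bool \<Rightarrow> ennreal) \<Rightarrow> ennreal" where
  "bern p h = h True * ennreal p + h False * ennreal (1 - p)"

lemma locE:
  assumes "finite I" "J \<subseteq> I" "loc J f"
  shows "(\<integral>\<^sup>+\<omega>. f \<omega> \<partial>QQ p I) = (\<integral>\<^sup>+\<omega>. f \<omega> \<partial>QQ p J)"
proof -
  have "QQ p J = map_pmf (\<lambda>f x. if x \<in> J then f x else False) (QQ p I)"
    unfolding QQ_def using assms by (intro Pi_pmf_subset) auto
  hence "(\<integral>\<^sup>+\<omega>. f \<omega> \<partial>QQ p J) = (\<integral>\<^sup>+\<omega>. f (\<lambda>x. if x \<in> J then \<omega> x else False) \<partial>QQ p I)"
    by simp
  also have "\<dots> = (\<integral>\<^sup>+\<omega>. f \<omega> \<partial>QQ p I)"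
  proof (rule nn_integral_cong)
    fix \<omega>
    have "agree J \<omega> (\<lambda>x. if x \<in> J then \<omega> x else False)" by (simp add: agree_def)
    thus "f (\<lambda>x. if x \<in> J then \<omega> x else False) = f \<omega>" using assms(3) by (simp add: loc_def)
  qed
  finally show ?thesis by simp
qed

lemma prodE:
  fixes f g :: "(edge \<Rightarrow> bool) \<Rightarrow> ennreal"
  assumes "finite A" "finite B" "A \<inter> B = {}" "loc A f" "loc B g"
  shows "(\<integral>\<^sup>+\<omega>. f \<omega> * g \<omega> \<partial>QQ p (A \<union> B)) = (\<integral>\<^sup>+\<omega>. f \<omega> \<partial>QQ p A) * (\<integral>\<^sup>+\<omega>. g \<omega> \<partial>QQ p B)"
proof -
  let ?m = "\<lambda>(a :: edge \<Rightarrow> bool, b :: edge \<Rightarrow> bool) x. if x \<in> A then a x else b x"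
  have "QQ p (A \<union> B) = map_pmf ?m (pair_pmf (QQ p A) (QQ p B))"
    unfolding QQ_def using assms by (intro Pi_pmf_union) auto
  hence "(\<integral>\<^sup>+\<omega>. f \<omega> * g \<omega> \<partial>QQ p (A \<union> B)) =
     (\<integral>\<^sup>+a. \<integral>\<^sup>+b. f (?m (a, b)) * g (?m (a, b)) \<partial>QQ p B \<partial>QQ p A)"
    by (simp add: nn_integral_pair_pmf')
  also have "\<dots> = (\<integral>\<^sup>+a. \<integral>\<^sup>+b. f a * g b \<partial>QQ p B \<partial>QQ p A)"
  proof (intro nn_integral_cong)
    fix a b
    have "agree A a (?m (a, b))" by (simp add: agree_def)
    moreover have "agree B b (?m (a, b))" using assms(3) by (auto simp: agree_def)
    ultimately show "f (?m (a, b)) * g (?m (a, b)) = f a * g b"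
      using assms(4,5) by (simp add: loc_def)
  qed
  also have "\<dots> = (\<integral>\<^sup>+a. f a * (\<integral>\<^sup>+b. g b \<partial>QQ p B) \<partial>QQ p A)"
    by (intro nn_integral_cong) (simp add: nn_integral_cmult)
  also have "\<dots> = (\<integral>\<^sup>+\<omega>. f \<omega> \<partial>QQ p A) * (\<integral>\<^sup>+\<omega>. g \<omega> \<partial>QQ p B)"
    by (simp add: nn_integral_multc)
  finally show ?thesis .
qed

lemma singleE:
  assumes "0 \<le> p" "p \<le> 1"
  shows "(\<integral>\<^sup>+\<omega>. h (\<omega> e) \<partial>QQ p {e}) = bern p h"
proof -
  have "QQ p {e} = map_pmf (\<lambda>a b. if b = e then a else False) (bernoulli_pmf p)"
    unfolding QQ_def by (rule Pi_pmf_singleton)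
  hence "(\<integral>\<^sup>+\<omega>. h (\<omega> e) \<partial>QQ p {e}) = (\<integral>\<^sup>+a. h a \<partial>bernoulli_pmf p)" by simp
  also have "\<dots> = (\<Sum>x\<in>UNIV. h x * pmf (bernoulli_pmf p) x)"
    by (rule nn_integral_measure_pmf_support) auto
  also have "\<dots> = bern p h" using assms by (simp add: UNIV_bool bern_def)
  finally show ?thesis .
qed

lemma probE: "(\<integral>\<^sup>+\<omega>. c \<partial>QQ p J) = c"
  by (simp add: measure_pmf.emeasure_space_1)

definition DD :: "bool list \<Rightarrow> nat \<Rightarrow> edge set" where
  "DD w m = {(t, w @ v) | t v. v \<noteq> [] \<and> length v \<le> m}"

definition AA :: "bool list \<Rightarrow> bool \<Rightarrow> nat \<Rightarrow> edge set" where
  "AA w b m = insert (False, w @ [b]) (insert (True, w @ [b]) (DD (w @ [b]) m))"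

lemma AA_char: "x \<in> AA w b m \<longleftrightarrow> (\<exists>t v. x = (t, w @ b # v) \<and> length v \<le> m)"
proof
  assume "x \<in> AA w b m"
  thus "\<exists>t v. x = (t, w @ b # v) \<and> length v \<le> m"
    unfolding AA_def DD_def by force
next
  assume "\<exists>t v. x = (t, w @ b # v) \<and> length v \<le> m"
  then obtain t v where x: "x = (t, w @ b # v)" "length v \<le> m" by blast
  show "x \<in> AA w b m"
  proof (cases "v = []")
    case True thus ?thesis using x by (cases t) (auto simp: AA_def)
  next
    case False
    hence "x \<in> DD (w @ [b]) m" using x unfolding DD_def by force
    thus ?thesis by (simp add: AA_def)
  qed
qed

lemma DD_Suc: "DD w (Suc m) = AA w False m \<union> AA w True m"
proof (intro set_eqI iffI)
  fix x assume "x \<in> DD w (Suc m)"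
  then obtain t v where x: "x = (t, w @ v)" "v \<noteq> []" "length v \<le> Suc m" unfolding DD_def by blast
  then obtain b v' where "v = b # v'" by (cases v) auto
  hence "x \<in> AA w b m" using x by (auto simp: AA_char)
  thus "x \<in> AA w False m \<union> AA w True m" by (cases b) auto
next
  fix x assume "x \<in> AA w False m \<union> AA w True m"
  then obtain b where "x \<in> AA w b m" by blast
  then obtain t v where "x = (t, w @ b # v)" "length v \<le> m" by (auto simp: AA_char)
  thus "x \<in> DD w (Suc m)" unfolding DD_def by force
qed

lemma finite_DD: "finite (DD w m)"
proof -
  have "DD w m \<subseteq> (\<lambda>(t, v). (t, w @ v)) ` ((UNIV :: bool set) \<times> {v :: bool list. set v \<subseteq> UNIV \<and> length v \<le> m})"
    unfolding DD_def by auto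
  moreover have "finite ((UNIV :: bool set) \<times> {v :: bool list. set v \<subseteq> UNIV \<and> length v \<le> m})"
    by (intro finite_SigmaI finite_lists_length_le) simp_all
  ultimately show ?thesis by (meson finite_imageI finite_subset)
qed

lemma finite_AA: "finite (AA w b m)"
  by (simp add: AA_def finite_DD)

lemma AA_disj: "AA w False m \<inter> AA w True m = {}"
proof -
  have *: "x \<in> AA w b m \<Longrightarrow> snd x ! length w = b" for x b
    by (auto simp: AA_char nth_append)
  have False if "x \<in> AA w False m" "x \<in> AA w True m" for x
    using *[OF that(1)] *[OF that(2)] by simp
  thus ?thesis by blast
qed

lemma DD_len: "x \<in> DD w m \<Longrightarrow> length (snd x) > length w"
  by (auto simp: DD_def)

lemma edges_DD: "edges n = DD [] n"
  unfolding edges_def DD_def by auto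

lemma loc_succ_dfs:
  "agree (DD w m) \<omega> \<omega>' \<Longrightarrow> succ w m \<omega>' = succ w m \<omega> \<and> dfs w m \<omega>' = dfs w m \<omega>"
proof (induction m arbitrary: w)
  case 0 thus ?case by simp
next
  case (Suc m)
  have ag: "agree (AA w b m) \<omega> \<omega>'" for b
    using Suc.prems DD_Suc[of w m] by (cases b) (auto simp: agree_def)
  have e1: "\<omega>' (t, w @ [b]) = \<omega> (t, w @ [b])" for t b
    using ag[of b] by (cases t) (auto simp: agree_def AA_def)
  have e2: "succ (w @ [b]) m \<omega>' = succ (w @ [b]) m \<omega>" "dfs (w @ [b]) m \<omega>' = dfs (w @ [b]) m \<omega>" for b
    using Suc.IH[of "w @ [b]"] ag[of b] by (auto simp: agree_def AA_def)
  show ?case by (simp add: dfs.simps(2) succ.simps(2) e1 e2)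
qed

lemma loc_br_blk:
  "agree (AA w b m) \<omega> \<omega>' \<Longrightarrow> br w b m \<omega>' = br w b m \<omega> \<and> blk w b m \<omega>' = blk w b m \<omega>"
proof -
  assume ag: "agree (AA w b m) \<omega> \<omega>'"
  have e1: "\<omega>' (t, w @ [b]) = \<omega> (t, w @ [b])" for t
    using ag by (cases t) (auto simp: agree_def AA_def)
  have "agree (DD (w @ [b]) m) \<omega> \<omega>'" using ag by (auto simp: agree_def AA_def)
  from loc_succ_dfs[OF this] show ?thesis by (simp add: br_def blk_def e1)
qed


abbreviation ind :: "bool \<Rightarrow> ennreal" where "ind b \<equiv> of_bool b"

lemma loc_const: "loc J (\<lambda>_. c)" by (simp add: loc_def)

lemma loc_succ: "loc (DD w m) (succ w m)"
  using loc_succ_dfs by (simp add: loc_def)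
lemma loc_dfs: "loc (DD w m) (dfs w m)"
  using loc_succ_dfs by (simp add: loc_def)
lemma loc_br: "loc (AA w b m) (br w b m)"
  using loc_br_blk by (simp add: loc_def)
lemma loc_blk: "loc (AA w b m) (blk w b m)"
  using loc_br_blk by (simp add: loc_def)

lemma loc_AA_gen: "loc (AA w b m) (\<lambda>\<omega>. F (br w b m \<omega>) (blk w b m \<omega>))"
  by (simp add: loc_def loc_br_blk)
lemma loc_DD_gen: "loc (DD w m) (\<lambda>\<omega>. F (succ w m \<omega>) (dfs w m \<omega>))"
  by (simp add: loc_def loc_succ_dfs)

lemma loc_comp: "loc J f \<Longrightarrow> loc J (\<lambda>\<omega>. g (f \<omega>))"
  by (simp add: loc_def)
lemma loc_comp2: "loc J f \<Longrightarrow> loc J h \<Longrightarrow> loc J (\<lambda>\<omega>. g (f \<omega>) (h \<omega>))"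
  by (simp add: loc_def)

context
  fixes p :: real
  assumes p0: "0 \<le> p" and p1: "p \<le> 1"
begin

lemma bern_ind: "bern p (\<lambda>x. ind x) = ennreal p"
  by (simp add: bern_def)
lemma bern_nind: "bern p (\<lambda>x. ind (\<not> x)) = ennreal (1 - p)"
  by (simp add: bern_def)
lemma bern_one: "bern p (\<lambda>x. 1) = 1"
proof -
  have "ennreal p + ennreal (1 - p) = 1" using ennreal_plus[of p "1 - p"] p0 p1 by simp
  thus ?thesis by (simp add: bern_def)
qed

lemma blockE:
  assumes f: "loc (DD (w@[b]) m) f"
  shows "(\<integral>\<^sup>+\<omega>. hF (\<omega> (False, w@[b])) * (hT (\<omega> (True, w@[b])) * f \<omega>) \<partial>QQ p (AA w b m))
       = bern p hF * (bern p hT * (\<integral>\<^sup>+\<omega>. f \<omega> \<partial>QQ p (DD (w@[b]) m)))"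
proof -
  let ?eF = "(False, w@[b])" and ?eT = "(True, w@[b])" and ?D = "DD (w@[b]) m"
  have AA: "AA w b m = {?eF} \<union> ({?eT} \<union> ?D)" by (auto simp: AA_def)
  have nF: "?eF \<notin> {?eT} \<union> ?D" using DD_len[of ?eF "w@[b]" m] by auto
  have nT: "?eT \<notin> ?D" using DD_len[of ?eT "w@[b]" m] by auto
  have l1: "loc {?eF} (\<lambda>\<omega>. hF (\<omega> ?eF))" by (simp add: loc_def agree_def)
  have l2: "loc {?eT} (\<lambda>\<omega>. hT (\<omega> ?eT))" by (simp add: loc_def agree_def)
  have l3: "loc ({?eT} \<union> ?D) (\<lambda>\<omega>. hT (\<omega> ?eT) * f \<omega>)"
    unfolding loc_def
  proof (intro allI impI)
    fix \<omega> \<omega>' assume a: "agree ({?eT} \<union> ?D) \<omega> \<omega>'"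
    hence "agree ?D \<omega> \<omega>'" by (rule agree_mono) auto
    hence "f \<omega>' = f \<omega>" using f by (simp add: loc_def)
    moreover have "\<omega>' ?eT = \<omega> ?eT" using a by (simp add: agree_def)
    ultimately show "hT (\<omega>' ?eT) * f \<omega>' = hT (\<omega> ?eT) * f \<omega>" by simp
  qed
  have "(\<integral>\<^sup>+\<omega>. hF (\<omega> ?eF) * (hT (\<omega> ?eT) * f \<omega>) \<partial>QQ p (AA w b m))
      = (\<integral>\<^sup>+\<omega>. hF (\<omega> ?eF) \<partial>QQ p {?eF}) * (\<integral>\<^sup>+\<omega>. hT (\<omega> ?eT) * f \<omega> \<partial>QQ p ({?eT} \<union> ?D))"
    unfolding AA using nF by (intro prodE l1 l3) (auto simp: finite_DD)
  also have "(\<integral>\<^sup>+\<omega>. hT (\<omega> ?eT) * f \<omega> \<partial>QQ p ({?eT} \<union> ?D))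
      = (\<integral>\<^sup>+\<omega>. hT (\<omega> ?eT) \<partial>QQ p {?eT}) * (\<integral>\<^sup>+\<omega>. f \<omega> \<partial>QQ p ?D)"
    using nT by (intro prodE l2 f) (auto simp: finite_DD)
  finally show ?thesis using p0 p1 by (simp add: singleE)
qed

lemma ennreal_bound1:
  assumes "Z \<le> ennreal z" "0 \<le> u" "0 \<le> v" "0 \<le> x" "0 \<le> y" "0 \<le> z"
  shows "ennreal u + ennreal v * (ennreal x + ennreal y * Z) \<le> ennreal (u + v * (x + y * z))"
proof -
  have "ennreal u + ennreal v * (ennreal x + ennreal y * Z) \<le> ennreal u + ennreal v * (ennreal x + ennreal y * ennreal z)"
    using assms(1) by (intro add_mono mult_left_mono order_refl) auto
  also have "\<dots> = ennreal (u + v * (x + y * z))"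
  proof -
    have 1: "ennreal y * ennreal z = ennreal (y * z)" using assms by (simp add: ennreal_mult)
    have 2: "ennreal x + ennreal (y * z) = ennreal (x + y * z)" using assms by simp
    have 3: "ennreal v * ennreal (x + y * z) = ennreal (v * (x + y * z))" using assms by (simp add: ennreal_mult)
    have 4: "ennreal u + ennreal (v * (x + y * z)) = ennreal (u + v * (x + y * z))" using assms by simp
    show ?thesis unfolding 1 2 3 4 ..
  qed
  finally show ?thesis .
qed

lemma BQ:
  assumes Q': "(\<integral>\<^sup>+\<omega>. ind (\<not> succ (w@[b]) m \<omega>) \<partial>QQ p (DD (w@[b]) m)) \<le> ennreal qs" and qs: "0 \<le> qs"
  shows "(\<integral>\<^sup>+\<omega>. ind (\<not> br w b m \<omega>) \<partial>QQ p (AA w b m)) \<le> ennreal ((1 - p) + p * ((1 - p) + p * qs))"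
proof -
  let ?eF = "(False, w@[b])" and ?eT = "(True, w@[b])" and ?D = "DD (w@[b]) m"
  let ?M = "QQ p (AA w b m)"
  have pw: "ind (\<not> br w b m \<omega>) =
     ind (\<not> \<omega> ?eF) * (1 * 1) + (ind (\<omega> ?eF) * (ind (\<not> \<omega> ?eT) * 1)
       + ind (\<omega> ?eF) * (ind (\<omega> ?eT) * ind (\<not> succ (w@[b]) m \<omega>)))" for \<omega>
    by (simp add: br_def)
  have "(\<integral>\<^sup>+\<omega>. ind (\<not> br w b m \<omega>) \<partial>?M) =
     (\<integral>\<^sup>+\<omega>. ind (\<not> \<omega> ?eF) * (1 * 1) \<partial>?M) + ((\<integral>\<^sup>+\<omega>. ind (\<omega> ?eF) * (ind (\<not> \<omega> ?eT) * 1) \<partial>?M)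
       + (\<integral>\<^sup>+\<omega>. ind (\<omega> ?eF) * (ind (\<omega> ?eT) * ind (\<not> succ (w@[b]) m \<omega>)) \<partial>?M))"
    unfolding pw by (simp add: nn_integral_add)
  also have "(\<integral>\<^sup>+\<omega>. ind (\<not> \<omega> ?eF) * (1 * 1) \<partial>?M) = ennreal (1 - p)"
    using blockE[OF loc_const, of w b m "\<lambda>x. ind (\<not> x)" "\<lambda>x. 1" 1]
    by (simp add: bern_nind bern_one probE)
  also have "(\<integral>\<^sup>+\<omega>. ind (\<omega> ?eF) * (ind (\<not> \<omega> ?eT) * 1) \<partial>?M) = ennreal p * ennreal (1 - p)"
    using blockE[OF loc_const, of w b m "\<lambda>x. ind x" "\<lambda>x. ind (\<not> x)" 1]
    by (simp add: bern_nind bern_ind probE)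
  also have "(\<integral>\<^sup>+\<omega>. ind (\<omega> ?eF) * (ind (\<omega> ?eT) * ind (\<not> succ (w@[b]) m \<omega>)) \<partial>?M)
      = ennreal p * (ennreal p * (\<integral>\<^sup>+\<omega>. ind (\<not> succ (w@[b]) m \<omega>) \<partial>QQ p ?D))"
    using blockE[where f = "\<lambda>\<omega>. ind (\<not> succ (w@[b]) m \<omega>)" and hF = "\<lambda>x. ind x" and hT = "\<lambda>x. ind x", OF loc_comp[OF loc_succ]]
    by (simp add: bern_ind)
  also have "ennreal (1 - p) + (ennreal p * ennreal (1 - p) + ennreal p * (ennreal p * (\<integral>\<^sup>+\<omega>. ind (\<not> succ (w@[b]) m \<omega>) \<partial>QQ p ?D)))
     = ennreal (1 - p) + ennreal p * (ennreal (1 - p) + ennreal p * (\<integral>\<^sup>+\<omega>. ind (\<not> succ (w@[b]) m \<omega>) \<partial>QQ p ?D))"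
    by (simp add: distrib_left)
  also have "\<dots> \<le> ennreal ((1 - p) + p * ((1 - p) + p * qs))"
    by (rule ennreal_bound1[OF Q']) (use p0 p1 qs in auto)
  finally show ?thesis .
qed

end


context
  fixes p :: real
  assumes p0: "0 \<le> p" and p1: "p \<le> 1"
begin

lemma BH:
  assumes H': "(\<integral>\<^sup>+\<omega>. of_nat (length (dfs (w@[b]) m \<omega>)) * ind (\<not> succ (w@[b]) m \<omega>) \<partial>QQ p (DD (w@[b]) m)) \<le> ennreal hb"
    and hb: "0 \<le> hb"
  shows "(\<integral>\<^sup>+\<omega>. of_nat (length (blk w b m \<omega>)) * ind (\<not> br w b m \<omega>) \<partial>QQ p (AA w b m)) \<le> ennreal (2 + p * (p * hb))"
proof -
  let ?eF = "(False, w@[b])" and ?eT = "(True, w@[b])" and ?D = "DD (w@[b]) m"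
  let ?M = "QQ p (AA w b m)"
  let ?f = "\<lambda>\<omega>. of_nat (length (dfs (w@[b]) m \<omega>)) * ind (\<not> succ (w@[b]) m \<omega>) :: ennreal"
  have pw: "of_nat (length (blk w b m \<omega>)) * ind (\<not> br w b m \<omega>) \<le> 2 + ind (\<omega> ?eF) * (ind (\<omega> ?eT) * ?f \<omega>)" for \<omega>
    by (cases "\<omega> ?eF"; cases "\<omega> ?eT"; cases "succ (w@[b]) m \<omega>") (simp_all add: blk_def br_def)
  have "(\<integral>\<^sup>+\<omega>. of_nat (length (blk w b m \<omega>)) * ind (\<not> br w b m \<omega>) \<partial>?M) \<le> (\<integral>\<^sup>+\<omega>. 2 + ind (\<omega> ?eF) * (ind (\<omega> ?eT) * ?f \<omega>) \<partial>?M)"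
    by (intro nn_integral_mono pw)
  also have "\<dots> = 2 + (\<integral>\<^sup>+\<omega>. ind (\<omega> ?eF) * (ind (\<omega> ?eT) * ?f \<omega>) \<partial>?M)"
    by (simp add: nn_integral_add probE)
  also have "(\<integral>\<^sup>+\<omega>. ind (\<omega> ?eF) * (ind (\<omega> ?eT) * ?f \<omega>) \<partial>?M) = ennreal p * (ennreal p * (\<integral>\<^sup>+\<omega>. ?f \<omega> \<partial>QQ p ?D))"
    using blockE[OF p0 p1, where f = ?f and hF = "\<lambda>x. ind x" and hT = "\<lambda>x. ind x",
       OF loc_DD_gen[where F = "\<lambda>s d. of_nat (length d) * ind (\<not> s)"]]
    by (simp add: bern_ind[OF p0 p1])
  also have "2 + ennreal p * (ennreal p * (\<integral>\<^sup>+\<omega>. ?f \<omega> \<partial>QQ p ?D)) \<le> ennreal 2 + ennreal p * (ennreal 0 + ennreal p * (\<integral>\<^sup>+\<omega>. ?f \<omega> \<partial>QQ p ?D))"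
    by simp
  also have "\<dots> \<le> ennreal (2 + p * (0 + p * hb))"
    by (rule ennreal_bound1[OF p0 p1 H']) (use p0 hb in auto)
  finally show ?thesis by simp
qed

lemma BG:
  assumes G': "(\<integral>\<^sup>+\<omega>. of_nat (length (dfs (w@[b]) m \<omega>)) * ind (succ (w@[b]) m \<omega>) \<partial>QQ p (DD (w@[b]) m)) \<le> ennreal g"
    and g: "0 \<le> g"
  shows "(\<integral>\<^sup>+\<omega>. of_nat (length (blk w b m \<omega>)) * ind (br w b m \<omega>) \<partial>QQ p (AA w b m)) \<le> ennreal (0 + p * (p * (2 + g)))"
proof -
  let ?eF = "(False, w@[b])" and ?eT = "(True, w@[b])" and ?D = "DD (w@[b]) m"
  let ?M = "QQ p (AA w b m)"
  let ?f = "\<lambda>\<omega>. of_nat (length (dfs (w@[b]) m \<omega>)) * ind (succ (w@[b]) m \<omega>) :: ennreal"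
  have pw: "of_nat (length (blk w b m \<omega>)) * ind (br w b m \<omega>) \<le> ind (\<omega> ?eF) * (ind (\<omega> ?eT) * (2 + ?f \<omega>))" for \<omega>
    by (cases "\<omega> ?eF"; cases "\<omega> ?eT"; cases "succ (w@[b]) m \<omega>") (simp_all add: blk_def br_def)
  have "(\<integral>\<^sup>+\<omega>. of_nat (length (blk w b m \<omega>)) * ind (br w b m \<omega>) \<partial>?M) \<le> (\<integral>\<^sup>+\<omega>. ind (\<omega> ?eF) * (ind (\<omega> ?eT) * (2 + ?f \<omega>)) \<partial>?M)"
    by (intro nn_integral_mono pw)
  also have "\<dots> = ennreal p * (ennreal p * (\<integral>\<^sup>+\<omega>. 2 + ?f \<omega> \<partial>QQ p ?D))"
    using blockE[OF p0 p1, where f = "\<lambda>\<omega>. 2 + ?f \<omega>" and hF = "\<lambda>x. ind x" and hT = "\<lambda>x. ind x",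
        OF loc_DD_gen[where F = "\<lambda>s d. 2 + of_nat (length d) * ind s"]]
    by (simp add: bern_ind[OF p0 p1])
  also have "(\<integral>\<^sup>+\<omega>. 2 + ?f \<omega> \<partial>QQ p ?D) = ennreal 2 + (\<integral>\<^sup>+\<omega>. ?f \<omega> \<partial>QQ p ?D)"
    by (simp add: nn_integral_add probE)
  also have "ennreal p * (ennreal p * (ennreal 2 + (\<integral>\<^sup>+\<omega>. ?f \<omega> \<partial>QQ p ?D))) =
      ennreal 0 + ennreal p * (ennreal 0 + ennreal p * (ennreal 2 + (\<integral>\<^sup>+\<omega>. ?f \<omega> \<partial>QQ p ?D)))"
    by simp
  also have "\<dots> \<le> ennreal (0 + p * (0 + p * (2 + g)))"
  proof (rule ennreal_bound1[OF p0 p1])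
    have "ennreal 2 + (\<integral>\<^sup>+\<omega>. ?f \<omega> \<partial>QQ p ?D) \<le> ennreal 2 + ennreal g" using G' by (rule add_left_mono)
    thus "ennreal 2 + (\<integral>\<^sup>+\<omega>. ?f \<omega> \<partial>QQ p ?D) \<le> ennreal (2 + g)" using g by simp
  qed (use p0 g in auto)
  finally show ?thesis by simp
qed

lemma B1: "(\<integral>\<^sup>+\<omega>. ind (P \<omega>) \<partial>QQ p J) \<le> 1"
proof -
  have "(\<integral>\<^sup>+\<omega>. ind (P \<omega>) \<partial>QQ p J) \<le> (\<integral>\<^sup>+\<omega>. 1 \<partial>QQ p J)"
    by (intro nn_integral_mono) simp
  thus ?thesis by (simp add: probE)
qed

end

lemma split_int:
  assumes "loc (AA w False m) f" "loc (AA w True m) g"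
  shows "(\<integral>\<^sup>+\<omega>. f \<omega> * g \<omega> \<partial>QQ p (DD w (Suc m))) =
     (\<integral>\<^sup>+\<omega>. f \<omega> \<partial>QQ p (AA w False m)) * (\<integral>\<^sup>+\<omega>. g \<omega> \<partial>QQ p (AA w True m))"
  unfolding DD_Suc by (rule prodE) (use assms in \<open>auto simp: finite_AA AA_disj\<close>)

lemma single_int:
  assumes "loc (AA w b m) f"
  shows "(\<integral>\<^sup>+\<omega>. f \<omega> \<partial>QQ p (DD w (Suc m))) = (\<integral>\<^sup>+\<omega>. f \<omega> \<partial>QQ p (AA w b m))"
proof -
  have sub: "AA w b m \<subseteq> DD w (Suc m)" by (cases b) (auto simp: DD_Suc)
  show ?thesis by (rule locE[OF finite_DD sub assms])
qed

abbreviation cA where "cA w b m \<omega> \<equiv> (of_nat (length (blk w b m \<omega>)) :: ennreal)"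

lemma Qstep:
  "(\<integral>\<^sup>+\<omega>. ind (\<not> succ w (Suc m) \<omega>) \<partial>QQ p (DD w (Suc m))) =
   (\<integral>\<^sup>+\<omega>. ind (\<not> br w False m \<omega>) \<partial>QQ p (AA w False m)) * (\<integral>\<^sup>+\<omega>. ind (\<not> br w True m \<omega>) \<partial>QQ p (AA w True m))"
proof -
  have "ind (\<not> succ w (Suc m) \<omega>) = ind (\<not> br w False m \<omega>) * ind (\<not> br w True m \<omega>)" for \<omega>
    by (simp add: succ_Suc_br)
  hence "(\<integral>\<^sup>+\<omega>. ind (\<not> succ w (Suc m) \<omega>) \<partial>QQ p (DD w (Suc m))) =
     (\<integral>\<^sup>+\<omega>. ind (\<not> br w False m \<omega>) * ind (\<not> br w True m \<omega>) \<partial>QQ p (DD w (Suc m)))" by simp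
  also have "\<dots> = (\<integral>\<^sup>+\<omega>. ind (\<not> br w False m \<omega>) \<partial>QQ p (AA w False m)) * (\<integral>\<^sup>+\<omega>. ind (\<not> br w True m \<omega>) \<partial>QQ p (AA w True m))"
    by (rule split_int) (rule loc_AA_gen[where F = "\<lambda>x y. ind (\<not> x)"])+
  finally show ?thesis .
qed

lemma Hstep:
  "(\<integral>\<^sup>+\<omega>. of_nat (length (dfs w (Suc m) \<omega>)) * ind (\<not> succ w (Suc m) \<omega>) \<partial>QQ p (DD w (Suc m))) =
   (\<integral>\<^sup>+\<omega>. cA w False m \<omega> * ind (\<not> br w False m \<omega>) \<partial>QQ p (AA w False m)) * (\<integral>\<^sup>+\<omega>. ind (\<not> br w True m \<omega>) \<partial>QQ p (AA w True m))
 + (\<integral>\<^sup>+\<omega>. ind (\<not> br w False m \<omega>) \<partial>QQ p (AA w False m)) * (\<integral>\<^sup>+\<omega>. cA w True m \<omega> * ind (\<not> br w True m \<omega>) \<partial>QQ p (AA w True m))"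
proof -
  have "of_nat (length (dfs w (Suc m) \<omega>)) * ind (\<not> succ w (Suc m) \<omega>) =
     (cA w False m \<omega> * ind (\<not> br w False m \<omega>)) * ind (\<not> br w True m \<omega>) +
     ind (\<not> br w False m \<omega>) * (cA w True m \<omega> * ind (\<not> br w True m \<omega>))" for \<omega>
    by (cases "br w False m \<omega>"; cases "br w True m \<omega>") (simp_all add: succ_Suc_br dfs_Suc')
  hence "(\<integral>\<^sup>+\<omega>. of_nat (length (dfs w (Suc m) \<omega>)) * ind (\<not> succ w (Suc m) \<omega>) \<partial>QQ p (DD w (Suc m))) =
     (\<integral>\<^sup>+\<omega>. (cA w False m \<omega> * ind (\<not> br w False m \<omega>)) * ind (\<not> br w True m \<omega>) \<partial>QQ p (DD w (Suc m))) +
     (\<integral>\<^sup>+\<omega>. ind (\<not> br w False m \<omega>) * (cA w True m \<omega> * ind (\<not> br w True m \<omega>)) \<partial>QQ p (DD w (Suc m)))"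
    by (simp add: nn_integral_add)
  also have "(\<integral>\<^sup>+\<omega>. (cA w False m \<omega> * ind (\<not> br w False m \<omega>)) * ind (\<not> br w True m \<omega>) \<partial>QQ p (DD w (Suc m))) =
      (\<integral>\<^sup>+\<omega>. cA w False m \<omega> * ind (\<not> br w False m \<omega>) \<partial>QQ p (AA w False m)) * (\<integral>\<^sup>+\<omega>. ind (\<not> br w True m \<omega>) \<partial>QQ p (AA w True m))"
    by (rule split_int[OF loc_AA_gen[where F = "\<lambda>x y. of_nat (length y) * ind (\<not> x)"] loc_AA_gen[where F = "\<lambda>x y. ind (\<not> x)"]])
  also have "(\<integral>\<^sup>+\<omega>. ind (\<not> br w False m \<omega>) * (cA w True m \<omega> * ind (\<not> br w True m \<omega>)) \<partial>QQ p (DD w (Suc m))) =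
      (\<integral>\<^sup>+\<omega>. ind (\<not> br w False m \<omega>) \<partial>QQ p (AA w False m)) * (\<integral>\<^sup>+\<omega>. cA w True m \<omega> * ind (\<not> br w True m \<omega>) \<partial>QQ p (AA w True m))"
    by (rule split_int[OF loc_AA_gen[where F = "\<lambda>x y. ind (\<not> x)"] loc_AA_gen[where F = "\<lambda>x y. of_nat (length y) * ind (\<not> x)"]])
  finally show ?thesis .
qed

lemma Gstep:
  "(\<integral>\<^sup>+\<omega>. of_nat (length (dfs w (Suc m) \<omega>)) * ind (succ w (Suc m) \<omega>) \<partial>QQ p (DD w (Suc m))) =
   (\<integral>\<^sup>+\<omega>. cA w False m \<omega> * ind (br w False m \<omega>) \<partial>QQ p (AA w False m))
 + (\<integral>\<^sup>+\<omega>. cA w False m \<omega> * ind (\<not> br w False m \<omega>) \<partial>QQ p (AA w False m)) * (\<integral>\<^sup>+\<omega>. ind (br w True m \<omega>) \<partial>QQ p (AA w True m))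
 + (\<integral>\<^sup>+\<omega>. ind (\<not> br w False m \<omega>) \<partial>QQ p (AA w False m)) * (\<integral>\<^sup>+\<omega>. cA w True m \<omega> * ind (br w True m \<omega>) \<partial>QQ p (AA w True m))"
proof -
  have "of_nat (length (dfs w (Suc m) \<omega>)) * ind (succ w (Suc m) \<omega>) =
     cA w False m \<omega> * ind (br w False m \<omega>) +
     (cA w False m \<omega> * ind (\<not> br w False m \<omega>)) * ind (br w True m \<omega>) +
     ind (\<not> br w False m \<omega>) * (cA w True m \<omega> * ind (br w True m \<omega>))" for \<omega>
    by (cases "br w False m \<omega>"; cases "br w True m \<omega>") (simp_all add: succ_Suc_br dfs_Suc')
  hence "(\<integral>\<^sup>+\<omega>. of_nat (length (dfs w (Suc m) \<omega>)) * ind (succ w (Suc m) \<omega>) \<partial>QQ p (DD w (Suc m))) =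
     (\<integral>\<^sup>+\<omega>. cA w False m \<omega> * ind (br w False m \<omega>) \<partial>QQ p (DD w (Suc m))) +
     (\<integral>\<^sup>+\<omega>. (cA w False m \<omega> * ind (\<not> br w False m \<omega>)) * ind (br w True m \<omega>) \<partial>QQ p (DD w (Suc m))) +
     (\<integral>\<^sup>+\<omega>. ind (\<not> br w False m \<omega>) * (cA w True m \<omega> * ind (br w True m \<omega>)) \<partial>QQ p (DD w (Suc m)))"
    by (simp add: nn_integral_add)
  also have "(\<integral>\<^sup>+\<omega>. cA w False m \<omega> * ind (br w False m \<omega>) \<partial>QQ p (DD w (Suc m))) =
      (\<integral>\<^sup>+\<omega>. cA w False m \<omega> * ind (br w False m \<omega>) \<partial>QQ p (AA w False m))"
    by (rule single_int[OF loc_AA_gen[where F = "\<lambda>x y. of_nat (length y) * ind x"]])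
  also have "(\<integral>\<^sup>+\<omega>. (cA w False m \<omega> * ind (\<not> br w False m \<omega>)) * ind (br w True m \<omega>) \<partial>QQ p (DD w (Suc m))) =
      (\<integral>\<^sup>+\<omega>. cA w False m \<omega> * ind (\<not> br w False m \<omega>) \<partial>QQ p (AA w False m)) * (\<integral>\<^sup>+\<omega>. ind (br w True m \<omega>) \<partial>QQ p (AA w True m))"
    by (rule split_int[OF loc_AA_gen[where F = "\<lambda>x y. of_nat (length y) * ind (\<not> x)"] loc_AA_gen[where F = "\<lambda>x y. ind x"]])
  also have "(\<integral>\<^sup>+\<omega>. ind (\<not> br w False m \<omega>) * (cA w True m \<omega> * ind (br w True m \<omega>)) \<partial>QQ p (DD w (Suc m))) =
      (\<integral>\<^sup>+\<omega>. ind (\<not> br w False m \<omega>) \<partial>QQ p (AA w False m)) * (\<integral>\<^sup>+\<omega>. cA w True m \<omega> * ind (br w True m \<omega>) \<partial>QQ p (AA w True m))"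
    by (rule split_int[OF loc_AA_gen[where F = "\<lambda>x y. ind (\<not> x)"] loc_AA_gen[where F = "\<lambda>x y. of_nat (length y) * ind x"]])
  finally show ?thesis .
qed


lemma nums:
  fixes p :: real
  assumes p2: "1/2 < p*p" and p0: "0 < p" and p1: "p \<le> 1"
  defines "a \<equiv> (1 - p*p)/(p*p)"
  defines "Hb \<equiv> 4*a/(2*p*p - 1)"
  defines "K \<equiv> 4 + p*(p*Hb)"
  shows "(1-p) + p*((1-p) + p*(a*a)) = a"
    and "(2 + p*(p*Hb))*a + a*(2 + p*(p*Hb)) \<le> Hb"
    and "p*(p*(2 + K*x)) + (2 + p*(p*Hb)) + a*(p*(p*(2 + K*x))) \<le> K*(x+1)"
    and "0 \<le> a" "a < 1" "0 \<le> Hb" "0 \<le> K"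
proof -
  have pp: "p*p > 0" using p0 by simp
  have pa: "p*p*a = 1 - p*p" unfolding a_def using pp p0 by simp
  have a0: "0 \<le> a" unfolding a_def using p1 p0 pp by (simp add: mult_le_one)
  have d: "2*p*p - 1 > 0" using p2 by simp
  have pH: "(2*p*p - 1) * Hb = 4*a" unfolding Hb_def using d by simp
  have Hb0: "0 \<le> Hb" unfolding Hb_def using a0 d by simp
  show "(1-p) + p*((1-p) + p*(a*a)) = a"
  proof -
    have "(1-p) + p*((1-p) + p*(a*a)) = (1 - p*p) + (p*p*a)*a" by (simp add: algebra_simps)
    also have "\<dots> = p*p*a + (p*p*a)*a" using pa by simp
    also have "\<dots> = a * (p*p + p*p*a)" by (simp add: algebra_simps)
    also have "\<dots> = a" using pa by simp
    finally show ?thesis .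
  qed
  show "(2 + p*(p*Hb))*a + a*(2 + p*(p*Hb)) \<le> Hb"
  proof -
    have "(2 + p*(p*Hb))*a + a*(2 + p*(p*Hb)) = 4*a + 2*(p*p*a)*Hb" by (simp add: algebra_simps)
    also have "\<dots> = (2*p*p - 1) * Hb + 2*(1 - p*p)*Hb" using pa pH by simp
    also have "\<dots> = Hb" by (simp add: algebra_simps)
    finally show ?thesis by simp
  qed
  show "p*(p*(2 + K*x)) + (2 + p*(p*Hb)) + a*(p*(p*(2 + K*x))) \<le> K*(x+1)"
  proof -
    have "p*(p*(2 + K*x)) + (2 + p*(p*Hb)) + a*(p*(p*(2 + K*x))) = (p*p + p*p*a)*(2 + K*x) + (2 + p*(p*Hb))"
      by (simp add: algebra_simps)
    also have "\<dots> = (2 + K*x) + (2 + p*(p*Hb))" using pa by simp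
    also have "\<dots> = K*(x+1)" unfolding K_def by (simp add: algebra_simps)
    finally show ?thesis by simp
  qed
  show "0 \<le> a" by (rule a0)
  show "a < 1" unfolding a_def using p2 pp by (simp add: field_simps)
  show "0 \<le> Hb" by (rule Hb0)
  have "0 \<le> p * (p * Hb)" using p0 Hb0 by simp
  thus "0 \<le> K" unfolding K_def by simp
qed

lemma emul: "0 \<le> x \<Longrightarrow> 0 \<le> y \<Longrightarrow> ennreal x * ennreal y = ennreal (x * y)"
  by (simp add: ennreal_mult)
lemma eadd: "0 \<le> x \<Longrightarrow> 0 \<le> y \<Longrightarrow> ennreal x + ennreal y = ennreal (x + y)"
  by simp

lemma eH: "0 \<le> x \<Longrightarrow> 0 \<le> y \<Longrightarrow> ennreal x * ennreal y + ennreal y * ennreal x = ennreal (x*y + y*x)"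
proof -
  assume a: "0 \<le> x" "0 \<le> y"
  have 1: "ennreal x * ennreal y = ennreal (x*y)" using a by (rule emul)
  have 2: "ennreal y * ennreal x = ennreal (y*x)" using a by (intro emul)
  have 3: "ennreal (x*y) + ennreal (y*x) = ennreal (x*y + y*x)" using a by (intro eadd) simp_all
  show ?thesis unfolding 1 2 3 ..
qed

lemma eG: "0 \<le> u \<Longrightarrow> 0 \<le> v \<Longrightarrow> 0 \<le> y \<Longrightarrow>
  ennreal u + ennreal v * 1 + ennreal y * ennreal u = ennreal (u + v + y*u)"
proof -
  assume a: "0 \<le> u" "0 \<le> v" "0 \<le> y"
  have 1: "ennreal y * ennreal u = ennreal (y*u)" using a by (intro emul)
  have 2: "ennreal u + ennreal v = ennreal (u + v)" using a by (intro eadd)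
  have 3: "ennreal (u + v) + ennreal (y*u) = ennreal (u + v + y*u)" using a by (intro eadd) simp_all
  show ?thesis unfolding 1 2 3 mult_1_right ..
qed

context
  fixes p :: real
  assumes p2: "1/2 < p*p" and p0: "0 < p" and p1: "p \<le> 1"
begin

definition "aa = (1 - p*p)/(p*p)"
definition "Hb = 4*aa/(2*p*p - 1)"
definition "KK = 4 + p*(p*Hb)"

lemmas N = nums[OF p2 p0 p1, folded aa_def, folded Hb_def, folded KK_def]

lemma main_ind:
  "\<forall>w. (\<integral>\<^sup>+\<omega>. ind (\<not> succ w m \<omega>) \<partial>QQ p (DD w m)) \<le> ennreal (aa*aa)
     \<and> (\<integral>\<^sup>+\<omega>. of_nat (length (dfs w m \<omega>)) * ind (\<not> succ w m \<omega>) \<partial>QQ p (DD w m)) \<le> ennreal Hb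
     \<and> (\<integral>\<^sup>+\<omega>. of_nat (length (dfs w m \<omega>)) * ind (succ w m \<omega>) \<partial>QQ p (DD w m)) \<le> ennreal (KK * real m)"
proof (induction m)
  case 0 thus ?case by simp
next
  case (Suc m)
  have pz: "0 \<le> p" using p0 by simp
  have a0: "0 \<le> aa" by (rule N(4))
  have Hb0: "0 \<le> Hb" by (rule N(6))
  have K0: "0 \<le> KK" by (rule N(7))
  show ?case
  proof
    fix w
    have IHb: "(\<integral>\<^sup>+\<omega>. ind (\<not> succ (w@[b]) m \<omega>) \<partial>QQ p (DD (w@[b]) m)) \<le> ennreal (aa*aa)
     \<and> (\<integral>\<^sup>+\<omega>. of_nat (length (dfs (w@[b]) m \<omega>)) * ind (\<not> succ (w@[b]) m \<omega>) \<partial>QQ p (DD (w@[b]) m)) \<le> ennreal Hb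
     \<and> (\<integral>\<^sup>+\<omega>. of_nat (length (dfs (w@[b]) m \<omega>)) * ind (succ (w@[b]) m \<omega>) \<partial>QQ p (DD (w@[b]) m)) \<le> ennreal (KK * real m)" for b
      using spec[OF Suc.IH, of "w@[b]"] .
    have q0: "0 \<le> aa*aa" using a0 by simp
    have Km0: "0 \<le> KK * real m" using K0 by simp
    have bq: "(\<integral>\<^sup>+\<omega>. ind (\<not> br w b m \<omega>) \<partial>QQ p (AA w b m)) \<le> ennreal aa" for b
      using BQ[OF pz p1 conjunct1[OF IHb] q0, unfolded N(1)] .
    have bh: "(\<integral>\<^sup>+\<omega>. cA w b m \<omega> * ind (\<not> br w b m \<omega>) \<partial>QQ p (AA w b m)) \<le> ennreal (2 + p*(p*Hb))" for b
      using BH[OF pz p1 conjunct1[OF conjunct2[OF IHb]] Hb0] .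
    have bg: "(\<integral>\<^sup>+\<omega>. cA w b m \<omega> * ind (br w b m \<omega>) \<partial>QQ p (AA w b m)) \<le> ennreal (p*(p*(2 + KK * real m)))" for b
      using BG[OF pz p1 conjunct2[OF conjunct2[OF IHb]] Km0] by (simp only: add_0_left)
    have b1: "(\<integral>\<^sup>+\<omega>. ind (br w b m \<omega>) \<partial>QQ p (AA w b m)) \<le> 1" for b
      by (rule B1[OF pz p1])
    have q: "(\<integral>\<^sup>+\<omega>. ind (\<not> succ w (Suc m) \<omega>) \<partial>QQ p (DD w (Suc m))) \<le> ennreal (aa*aa)"
    proof -
      have "(\<integral>\<^sup>+\<omega>. ind (\<not> succ w (Suc m) \<omega>) \<partial>QQ p (DD w (Suc m))) \<le> ennreal aa * ennreal aa"
        unfolding Qstep by (intro mult_mono bq) auto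
      thus ?thesis by (simp only: emul[OF a0 a0])
    qed
    have h: "(\<integral>\<^sup>+\<omega>. of_nat (length (dfs w (Suc m) \<omega>)) * ind (\<not> succ w (Suc m) \<omega>) \<partial>QQ p (DD w (Suc m))) \<le> ennreal Hb"
    proof -
      have "(\<integral>\<^sup>+\<omega>. of_nat (length (dfs w (Suc m) \<omega>)) * ind (\<not> succ w (Suc m) \<omega>) \<partial>QQ p (DD w (Suc m)))
         \<le> ennreal (2 + p*(p*Hb)) * ennreal aa + ennreal aa * ennreal (2 + p*(p*Hb))"
        unfolding Hstep by (intro add_mono mult_mono bq bh) auto
      also have "\<dots> = ennreal ((2 + p*(p*Hb))*aa + aa*(2 + p*(p*Hb)))"
        by (rule eH) (use a0 Hb0 pz in simp_all)
      also have "\<dots> \<le> ennreal Hb" by (rule ennreal_leI) (rule N(2))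
      finally show ?thesis .
    qed
    have g: "(\<integral>\<^sup>+\<omega>. of_nat (length (dfs w (Suc m) \<omega>)) * ind (succ w (Suc m) \<omega>) \<partial>QQ p (DD w (Suc m))) \<le> ennreal (KK * real (Suc m))"
    proof -
      have "(\<integral>\<^sup>+\<omega>. of_nat (length (dfs w (Suc m) \<omega>)) * ind (succ w (Suc m) \<omega>) \<partial>QQ p (DD w (Suc m)))
         \<le> ennreal (p*(p*(2 + KK * real m))) + ennreal (2 + p*(p*Hb)) * 1 + ennreal aa * ennreal (p*(p*(2 + KK * real m)))"
        unfolding Gstep by (intro add_mono mult_mono bq bh bg b1) auto
      also have "\<dots> = ennreal (p*(p*(2 + KK * real m)) + (2 + p*(p*Hb)) + aa*(p*(p*(2 + KK * real m))))"
        by (rule eG) (use a0 Hb0 pz K0 in simp_all)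
      also have "\<dots> \<le> ennreal (KK * (real m + 1))" by (rule ennreal_leI) (rule N(3))
      also have "ennreal (KK * (real m + 1)) = ennreal (KK * real (Suc m))" by (simp add: add.commute)
      finally show ?thesis .
    qed
    show "(\<integral>\<^sup>+\<omega>. ind (\<not> succ w (Suc m) \<omega>) \<partial>QQ p (DD w (Suc m))) \<le> ennreal (aa*aa)
     \<and> (\<integral>\<^sup>+\<omega>. of_nat (length (dfs w (Suc m) \<omega>)) * ind (\<not> succ w (Suc m) \<omega>) \<partial>QQ p (DD w (Suc m))) \<le> ennreal Hb
     \<and> (\<integral>\<^sup>+\<omega>. of_nat (length (dfs w (Suc m) \<omega>)) * ind (succ w (Suc m) \<omega>) \<partial>QQ p (DD w (Suc m))) \<le> ennreal (KK * real (Suc m))"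
      using q h g by blast
  qed
qed

end


theorem mainTheorem7:
  fixes p :: real
  assumes "p > sqrt (1/2)" and "p \<le> 1"
  shows "\<exists>c::real. \<forall>n::nat. \<exists>\<sigma>::strategy.
           expected_routing_cost n p \<sigma> \<le> ennreal (c * real n)"
proof -
  have sq0: "0 < sqrt (1/2::real)" by simp
  have p0: "0 < p" using assms(1) sq0 by linarith
  have p1: "p \<le> 1" by (rule assms(2))
  have "(sqrt (1/2::real))^2 < p^2"
    by (rule power_strict_mono) (use assms(1) sq0 in auto)
  hence p2: "1/2 < p*p" by (simp add: power2_eq_square)
  have pz: "0 \<le> p" using p0 by simp
  note N = N[OF p2 p0 p1]
  define qs where "qs = aa p * aa p"
  have qs0: "0 \<le> qs" unfolding qs_def using N(4) by simp
  have "aa p * aa p \<le> aa p" using N(4) N(5) by (intro mult_left_le) simp_all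
  hence qs1: "qs < 1" unfolding qs_def using N(5) by simp
  define c where "c = KK p / (1 - qs)"
  show ?thesis
  proof (intro exI[of _ c] allI)
    fix n :: nat
    let ?M = "measure_pmf (perc n p)"
    let ?C = "{\<omega>. roots_connected n (open_edges \<omega>)}"
    have MQ: "perc n p = QQ p (DD [] n)" by (simp add: perc_def QQ_def edges_DD)
    have IH: "(\<integral>\<^sup>+\<omega>. ind (\<not> succ [] n \<omega>) \<partial>QQ p (DD [] n)) \<le> ennreal (aa p * aa p)
     \<and> (\<integral>\<^sup>+\<omega>. of_nat (length (dfs [] n \<omega>)) * ind (\<not> succ [] n \<omega>) \<partial>QQ p (DD [] n)) \<le> ennreal (Hb p)
     \<and> (\<integral>\<^sup>+\<omega>. of_nat (length (dfs [] n \<omega>)) * ind (succ [] n \<omega>) \<partial>QQ p (DD [] n)) \<le> ennreal (KK p * real n)"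
      using spec[OF main_ind[OF p2 p0 p1], of "[]" n] .
    have num: "(\<integral>\<^sup>+\<omega>. routing_cost n (sigma n) \<omega> * indicator ?C \<omega> \<partial>?M) \<le> ennreal (KK p * real n)"
    proof -
      have "(\<integral>\<^sup>+\<omega>. routing_cost n (sigma n) \<omega> * indicator ?C \<omega> \<partial>?M)
          \<le> (\<integral>\<^sup>+\<omega>. of_nat (length (dfs [] n \<omega>)) * ind (succ [] n \<omega>) \<partial>?M)"
      proof (rule nn_integral_mono)
        fix \<omega>
        show "routing_cost n (sigma n) \<omega> * indicator ?C \<omega> \<le> of_nat (length (dfs [] n \<omega>)) * ind (succ [] n \<omega>)"
        proof (cases "\<omega> \<in> ?C")
          case True
          hence s: "succ [] n \<omega>" using conn_succ by simp
          show ?thesis using found_cost[OF s] True s by simp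
        next
          case False thus ?thesis by simp
        qed
      qed
      also have "\<dots> \<le> ennreal (KK p * real n)" using IH MQ by simp
      finally show ?thesis .
    qed
    have den: "ennreal (1 - qs) \<le> emeasure ?M ?C"
    proof -
      let ?x = "\<integral>\<^sup>+\<omega>. ind (succ [] n \<omega>) \<partial>?M"
      let ?y = "\<integral>\<^sup>+\<omega>. ind (\<not> succ [] n \<omega>) \<partial>?M"
      have y: "?y \<le> ennreal qs" using IH MQ qs_def by simp
      have "?x + ?y = (\<integral>\<^sup>+\<omega>. ind (succ [] n \<omega>) + ind (\<not> succ [] n \<omega>) \<partial>?M)"
        by (simp add: nn_integral_add)
      also have "\<dots> = (\<integral>\<^sup>+\<omega>. 1 \<partial>?M)" by (intro nn_integral_cong) simp
      also have "\<dots> = 1" by (simp add: measure_pmf.emeasure_space_1)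
      finally have xy: "?x + ?y = 1" .
      have yt: "?y \<noteq> \<top>" using y by (metis ennreal_neq_top neq_top_trans)
      have "?x = (?x + ?y) - ?y" using yt by simp
      also have "\<dots> = 1 - ?y" using xy by simp
      also have "\<dots> \<ge> 1 - ennreal qs" by (rule ennreal_minus_mono) (use y in auto)
      finally have x: "1 - ennreal qs \<le> ?x" .
      have "1 - ennreal qs = ennreal (1 - qs)" using qs0 ennreal_minus[of qs 1] by simp
      hence "ennreal (1 - qs) \<le> ?x" using x by simp
      also have "?x \<le> (\<integral>\<^sup>+\<omega>. indicator ?C \<omega> \<partial>?M)"
        by (intro nn_integral_mono) (auto simp: succ_conn split: split_indicator)
      also have "\<dots> = emeasure ?M ?C" by simp
      finally show ?thesis .
    qed
    have dpos: "0 < emeasure ?M ?C"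
      using den qs1 by (metis ennreal_eq_0_iff diff_gt_0_iff_gt leD not_gr_zero)
    have "expected_routing_cost n p (sigma n) \<le> ennreal (c * real n)"
      unfolding expected_routing_cost_def
    proof (rule divide_le_posI_ennreal[OF dpos])
      have "ennreal (KK p * real n) = ennreal (1 - qs) * ennreal (c * real n)"
        unfolding c_def using qs1 by (simp add: ennreal_mult[symmetric] N(7))
      also have "\<dots> \<le> emeasure ?M ?C * ennreal (c * real n)"
        using den by (rule mult_right_mono) simp
      finally show "(\<integral>\<^sup>+\<omega>. routing_cost n (sigma n) \<omega> * indicator ?C \<omega> \<partial>?M) \<le> emeasure ?M ?C * ennreal (c * real n)"
        using num by simp
    qed
    thus "\<exists>\<sigma>. expected_routing_cost n p \<sigma> \<le> ennreal (c * real n)" by blast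
  qed
qed


end
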